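(* Let $2\le k<n$ and let $\pi_\bullet$ be an integral point of the tropical Grassmannian $\mathrm{Trop}\,\mathrm{Gr}(k,n)$ (equivalently, a representative of an integral point of $\mathrm{Trop}\,X(k,n)$). Then there is a weak scaffold $(Q,\mathbf z)$ whose tropical Plücker vector is equal to $\pi_\bullet$ modulo the lineality space $L_{k,n}$.
   Context: $\mathrm{Trop}\,\mathrm{Gr}(k,n)\subset\mathbb R^{\binom{[n]}{k}}$ is the closure of the set of vectors $(\mathrm{val}\,p_I(V))_I$ where $V$ ranges over points of the Grassmannian over Puiseux series all of whose Plücker coordinates $p_I$ are nonzero. The lineality space $L_{k,n}$ is spanned by $\sum_{I\ni i}e^I$, $i\in[n]$; $\mathrm{Trop}\,X(k,n)$ is the quotient by it, and a point is integral if it has a representative in $\mathbb Z^{\binom{[n]}{k}}$. The Dressian $\mathrm{Dr}(k,n)$ is the set of $\pi_\bullet$ such that for every $S\in\binom{[n]}{k-2}$ and $a<b<c<d$ in $[n]\setminus S$ the minimum of $\pi_{Sab}+\pi_{Scd},\pi_{Sac}+\pi_{Sbd},\pi_{Sad}+\pi_{Sbc}$ is attained at least twice. Let $Q$ be a finite loopless directed graph with $\mathbf z=(z_1,\dots,z_n)\in V(Q)^n$ (not necessarily distinct). Directed distance $\delta(v,w)$ is the minimum total length of a walk from $v$ to $w$, where each edge $v\to w$ may be traversed forwards at cost 1 or backwards at cost $k-1$; it is assumed all such distances are finite and that for every edge $v\to w$ one has $\delta(v,w)=1$ and $\delta(w,v)=k-1$. The Fermat–Le distance sum is $\Sigma_Q(I)=\min_{x\in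 V(Q)}\sum_{i\in I}\delta(x,z_i)$ for $I\in\binom{[n]}{k}$, and the tropical Plücker vector of $(Q,\mathbf z)$ is $\pi_I=-\frac1k\Sigma_Q(I)$. A coloring is $c:V(Q)\to\mathbb Z/k$ with $c(w)=c(v)+1$ for each edge $v\to w$. $(Q,\mathbf z)$ is a weak scaffold if its tropical Plücker vector lies in $\mathrm{Dr}(k,n)$ and $Q$ admits a coloring. *)

theory Defs
  imports "HOL-Analysis.Analysis"
          "HOL-Computational_Algebra.Formal_Laurent_Series"
          "HOL-Combinatorics.Permutations"
begin

text \<open>Ground set [n] is rendered as {0..<n}. Vectors in R^(binom [n] k) are
  functions nat set => real; only their values on k-subsets of {0..<n} matter.\<close>

definition ksubsets :: "nat \<Rightarrow> nat \<Rightarrow> nat set set" where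
  "ksubsets k n = {I. I \<subseteq> {0..<n} \<and> card I = k}"

definition nth_elem :: "nat set \<Rightarrow> nat \<Rightarrow> nat" where
  "nth_elem I j = sorted_list_of_set I ! j"

definition minor :: "nat \<Rightarrow> (nat \<Rightarrow> nat \<Rightarrow> 'a::comm_ring_1) \<Rightarrow> nat set \<Rightarrow> 'a" where
  "minor k M I = (\<Sum>p | p permutes {0..<k}.
       of_int (sign p) * (\<Prod>i<k. M i (nth_elem I (p i))))"

text \<open>A matrix over
  Puiseux series has all entries in C((t^(1/N))) for some N >= 1; writing
  s = t^(1/N), the valuation of a Puiseux series equals (1/N) times the order
  (fls_subdegree) in s.\<close>
definition trop_gr_realizable :: "nat \<Rightarrow> nat \<Rightarrow> (nat set \<Rightarrow> real) set" where
  "trop_gr_realizable k n =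
     {\<pi>. \<exists>(N::nat) (M :: nat \<Rightarrow> nat \<Rightarrow> complex fls). N \<ge> 1 \<and>
          (\<forall>I\<in>ksubsets k n. minor k M I \<noteq> 0 \<and>
               \<pi> I = real_of_int (fls_subdegree (minor k M I)) / real N)}"

definition trop_gr :: "nat \<Rightarrow> nat \<Rightarrow> (nat set \<Rightarrow> real) set" where
  "trop_gr k n = {\<pi>. \<forall>\<epsilon>>0. \<exists>\<sigma>\<in>trop_gr_realizable k n.
                        \<forall>I\<in>ksubsets k n. \<bar>\<pi> I - \<sigma> I\<bar> < \<epsilon>}"

text \<open>Element of the lineality space L_{k,n} with coefficients \<lambda>:
  sum_i \<lambda>_i sum_{I containing i} e^I.\<close>
definition lineality_vec :: "(nat \<Rightarrow> real) \<Rightarrow> nat set \<Rightarrow> real" where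
  "lineality_vec c I = (\<Sum>i\<in>I. c i)"

definition equiv_mod_lineality :: "nat \<Rightarrow> nat \<Rightarrow> (nat set \<Rightarrow> real) \<Rightarrow> (nat set \<Rightarrow> real) \<Rightarrow> bool" where
  "equiv_mod_lineality k n \<pi> \<sigma> \<longleftrightarrow>
     (\<exists>lam. \<forall>I\<in>ksubsets k n. \<pi> I = \<sigma> I + lineality_vec lam I)"

definition integral_mod_lineality :: "nat \<Rightarrow> nat \<Rightarrow> (nat set \<Rightarrow> real) \<Rightarrow> bool" where
  "integral_mod_lineality k n \<pi> \<longleftrightarrow>
     (\<exists>lam. \<forall>I\<in>ksubsets k n. \<pi> I + lineality_vec lam I \<in> \<int>)"

definition dressian :: "nat \<Rightarrow> nat \<Rightarrow> (nat set \<Rightarrow> real) set" where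
  "dressian k n = {\<pi>. \<forall>S a b c d. S \<in> ksubsets (k-2) n \<and>
       a < b \<and> b < c \<and> c < d \<and> d < n \<and> a \<notin> S \<and> b \<notin> S \<and> c \<notin> S \<and> d \<notin> S \<longrightarrow>
       (let x = \<pi> (insert a (insert b S)) + \<pi> (insert c (insert d S));
            y = \<pi> (insert a (insert c S)) + \<pi> (insert b (insert d S));
            z = \<pi> (insert a (insert d S)) + \<pi> (insert b (insert c S));
            m = min x (min y z)
        in (x = m \<and> y = m) \<or> (x = m \<and> z = m) \<or> (y = m \<and> z = m))}"

inductive walk_cost :: "nat \<Rightarrow> (nat \<times> nat) set \<Rightarrow> nat \<Rightarrow> nat \<Rightarrow> nat \<Rightarrow> bool"
  for k E where
  nil: "walk_cost k E v v 0"
| fwd: "(v, u) \<in> E \<Longrightarrow> walk_cost k E u w c \<Longrightarrow> walk_cost k E v w (c + 1)"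
| bwd: "(u, v) \<in> E \<Longrightarrow> walk_cost k E u w c \<Longrightarrow> walk_cost k E v w (c + (k - 1))"

definition ddist :: "nat \<Rightarrow> (nat \<times> nat) set \<Rightarrow> nat \<Rightarrow> nat \<Rightarrow> nat" where
  "ddist k E v w = (LEAST c. walk_cost k E v w c)"

definition fl_sum :: "nat \<Rightarrow> nat set \<Rightarrow> (nat \<times> nat) set \<Rightarrow> (nat \<Rightarrow> nat) \<Rightarrow> nat set \<Rightarrow> nat" where
  "fl_sum k V E z I = Min ((\<lambda>x. \<Sum>i\<in>I. ddist k E x (z i)) ` V)"

definition trop_pluecker :: "nat \<Rightarrow> nat set \<Rightarrow> (nat \<times> nat) set \<Rightarrow> (nat \<Rightarrow> nat) \<Rightarrow> nat set \<Rightarrow> real" where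
  "trop_pluecker k V E z I = - real (fl_sum k V E z I) / real k"

definition valid_quiver :: "nat \<Rightarrow> nat \<Rightarrow> nat set \<Rightarrow> (nat \<times> nat) set \<Rightarrow> (nat \<Rightarrow> nat) \<Rightarrow> bool" where
  "valid_quiver k n V E z \<longleftrightarrow>
     finite V \<and> E \<subseteq> V \<times> V \<and> (\<forall>v. (v, v) \<notin> E) \<and> (\<forall>i<n. z i \<in> V) \<and>
     (\<forall>v\<in>V. \<forall>w\<in>V. \<exists>c. walk_cost k E v w c) \<and>
     (\<forall>(v, w)\<in>E. ddist k E v w = 1 \<and> ddist k E w v = k - 1)"

definition has_coloring :: "nat \<Rightarrow> nat set \<Rightarrow> (nat \<times> nat) set \<Rightarrow> bool" where
  "has_coloring k V E \<longleftrightarrow>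
     (\<exists>col :: nat \<Rightarrow> int. \<forall>(v, w)\<in>E. col w mod int k = (col v + 1) mod int k)"

definition weak_scaffold :: "nat \<Rightarrow> nat \<Rightarrow> nat set \<Rightarrow> (nat \<times> nat) set \<Rightarrow> (nat \<Rightarrow> nat) \<Rightarrow> bool" where
  "weak_scaffold k n V E z \<longleftrightarrow>
     valid_quiver k n V E z \<and> trop_pluecker k V E z \<in> dressian k n \<and> has_coloring k V E"

end

theory Submission imports Defs "Jordan_Normal_Form.Determinant" "HOL-Combinatorics.List_Permutation" "HOL-Library.Nat_Bijection" begin


definition Dv :: "nat \<Rightarrow> (nat \<Rightarrow> 'a::comm_ring_1) list \<Rightarrow> 'a" where
  "Dv k cs = Determinant.det (Matrix.mat k k (\<lambda>(i,j). (cs!j) i))"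

lemma minor_Dv:
  assumes "card I = k"
  shows "minor k M I = Dv k (map (\<lambda>c i. M i c) (sorted_list_of_set I))"
proof -
  have len: "length (sorted_list_of_set I) = k" using assms by simp
  have pk: "\<And>p i. p permutes {..<card I} \<Longrightarrow> i < card I \<Longrightarrow> p i < card I"
    using permutes_in_image by fastforce
  show ?thesis
    unfolding minor_def Dv_def Determinant.det_def
    apply (simp add: atLeast0LessThan)
    apply (rule sum.cong[OF refl])
    apply (rule arg_cong2[where f="(*)"], simp)
    apply (rule prod.cong[OF refl])
    using len pk by (auto simp: nth_elem_def)
qed

lemma Dv_permute:
  assumes q: "q permutes {..<k}" and len: "length cs = k"
  shows "Dv k (permute_list q cs) = signof q * Dv k cs"
proof -
  define A where "A = Matrix.mat k k (\<lambda>(i,j). (cs!j) i)"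
  have q': "q permutes {0..<k}" using q by (simp add: atLeast0LessThan)
  have AT: "transpose_mat A \<in> carrier_mat k k" unfolding A_def by simp
  have "Dv k (permute_list q cs) = Determinant.det (transpose_mat (Matrix.mat k k (\<lambda>(i,j). (transpose_mat A) $$ (q i, j))))"
    unfolding Dv_def
    apply (rule arg_cong[where f=Determinant.det])
    apply (rule eq_matI)
    using len q permutes_in_image[OF q] by (auto simp: A_def permute_list_nth)
  also have "\<dots> = Determinant.det (Matrix.mat k k (\<lambda>(i,j). (transpose_mat A) $$ (q i, j)))"
    using det_transpose[of "Matrix.mat k k (\<lambda>(i,j). (transpose_mat A) $$ (q i, j))" k] by simp
  also have "\<dots> = signof q * Determinant.det (transpose_mat A)"
    by (rule det_permute_rows[OF AT q'])
  also have "Determinant.det (transpose_mat A) = Determinant.det A"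
    using det_transpose[of A k] by (simp add: A_def)
  finally show ?thesis unfolding Dv_def A_def by simp
qed

lemma Dv_mset:
  assumes "mset xs = mset ys" "length ys = k"
  shows "Dv k xs = Dv k ys \<or> Dv k xs = - Dv k ys"
proof -
  obtain q where q: "q permutes {..<length ys}" "permute_list q ys = xs"
    using mset_eq_permutation[OF assms(1)] by blast
  have "Dv k xs = signof q * Dv k ys" using Dv_permute[of q k ys] q assms(2) by simp
  moreover have "sign q = (1::int) \<or> sign q = -1" by (simp add: sign_def)
  ultimately show ?thesis by auto
qed

lemma Dv_cong:
  assumes "\<And>i j. i < k \<Longrightarrow> j < k \<Longrightarrow> (xs!j) i = (ys!j) i"
  shows "Dv k xs = Dv k ys"
  unfolding Dv_def by (rule arg_cong[where f=Determinant.det], rule eq_matI, auto simp: assms)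

lemma Dv_lin:
  fixes ws :: "(nat \<Rightarrow> 'a::comm_ring_1) list"
  assumes len: "length ws = k - 2" and k: "2 \<le> k"
  shows "\<exists>cof. \<forall>x. Dv k (ws@[x,d]) = (\<Sum>i<k. x i * cof i)"
proof -
  define A where "A x = Matrix.mat k k (\<lambda>(i,j). ((ws@[x,d])!j) i)" for x :: "nat \<Rightarrow> 'a"
  have nth_other: "(ws@[x,d])!j = (ws@[y,d])!j" if "j < k" "j \<noteq> k - 2" for x y j
  proof (cases "j < k - 2")
    case True then show ?thesis using len by (simp add: nth_append)
  next
    case False then have "j = length ws + 1" using that len by linarith
    then show ?thesis by (simp add: nth_append)
  qed
  have del: "mat_delete (A x) i (k-2) = mat_delete (A (\<lambda>_. 0)) i (k-2)" if "i < k" for x i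
  proof -
    have e1: "(ws@[x,d])!j' = (ws@[(\<lambda>_. 0),d])!j'" if "j' < k - 2" for j'
      using nth_other[of j' x "\<lambda>_. 0"] that by simp
    have e2: "(ws@[x,d])!(Suc j') = (ws@[(\<lambda>_. 0),d])!(Suc j')" if "j' < k - 1" "\<not> j' < k - 2" for j'
      using nth_other[of "Suc j'" x "\<lambda>_. 0"] that by simp
    show ?thesis unfolding mat_delete_def A_def
      by (intro eq_matI) (auto simp: e1 e2)
  qed
  have col: "(ws@[x,d])!(k-2) = x" for x using len by (simp add: nth_append)
  show ?thesis
  proof (intro exI allI)
    fix x
    have "Dv k (ws@[x,d]) = Determinant.det (A x)" unfolding Dv_def A_def by simp
    also have "\<dots> = (\<Sum>i<k. A x $$ (i, k-2) * cofactor (A x) i (k-2))"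
      by (rule laplace_expansion_column, auto simp: A_def, insert k, linarith)
    also have "\<dots> = (\<Sum>i<k. x i * cofactor (A (\<lambda>_. 0)) i (k-2))"
    proof (rule sum.cong[OF refl])
      fix i assume "i \<in> {..<k}"
      then have i: "i < k" by simp
      have "A x $$ (i, k-2) = x i" using i k col unfolding A_def by simp
      moreover have "cofactor (A x) i (k-2) = cofactor (A (\<lambda>_. 0)) i (k-2)"
        unfolding cofactor_def using del[OF i, of x] by simp
      ultimately show "A x $$ (i, k-2) * cofactor (A x) i (k-2) = x i * cofactor (A (\<lambda>_. 0)) i (k-2)"
        by simp
    qed
    finally show "Dv k (ws@[x,d]) = (\<Sum>i<k. x i * cofactor (A (\<lambda>_. 0)) i (k-2))" .
  qed
qed

lemma del_nth:
  assumes "m < length vs" "j < length vs - 1"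
  shows "(take m vs @ drop (Suc m) vs) ! j = vs ! (if j < m then j else Suc j)"
  using assms by (auto simp: nth_append)

lemma plucker3:
  fixes ws :: "(nat \<Rightarrow> 'a::idom) list"
  assumes len: "length ws = k - 2" and k: "2 \<le> k"
  shows "Dv k (ws@[a,d]) * Dv k (ws@[b,c]) - Dv k (ws@[b,d]) * Dv k (ws@[a,c])
         + Dv k (ws@[c,d]) * Dv k (ws@[a,b]) = 0"
proof -
  obtain cof where cof: "\<And>x. Dv k (ws@[x,d]) = (\<Sum>i<k. x i * cof i)"
    using Dv_lin[OF len k] by blast
  define K where "K = length ws"
  have kK: "k = K + 2" using len k unfolding K_def by simp
  define vs where "vs = ws @ [a,b,c]"
  have lvs: "length vs = k + 1" unfolding vs_def using kK K_def by simp
  define \<phi> where "\<phi> x = Dv k (ws@[x,d])" for x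
  define N where "N = Matrix.mat (k+1) (k+1) (\<lambda>(r,m). if r = 0 then \<phi> (vs!m) else (vs!m) (r-1))"
  have Nc: "N \<in> carrier_mat (k+1) (k+1)" unfolding N_def by simp
  have detN: "Determinant.det N = 0"
  proof -
    define y where "y = vec (k+1) (\<lambda>r. if r = 0 then 1 else - cof (r-1))"
    have "transpose_mat N *\<^sub>v y = 0\<^sub>v (k+1)"
    proof (rule eq_vecI)
      fix m assume "m < dim_vec (0\<^sub>v (k+1) :: 'a vec)"
      then have m: "m < k + 1" by simp
      have "(transpose_mat N *\<^sub>v y) $ m = (\<Sum>r<k+1. N $$ (r,m) * y $ r)"
        using m Nc by (simp add: mult_mat_vec_def scalar_prod_def y_def atLeast0LessThan)
      also have "\<dots> = N $$ (0,m) * y $ 0 + (\<Sum>i<k. N $$ (Suc i,m) * y $ Suc i)"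
        by (simp only: Suc_eq_plus1[symmetric] sum.lessThan_Suc_shift)
      also have "\<dots> = \<phi> (vs!m) - (\<Sum>i<k. (vs!m) i * cof i)"
        using m by (simp add: N_def y_def sum_negf)
      also have "\<dots> = 0" unfolding \<phi>_def cof by simp
      finally show "(transpose_mat N *\<^sub>v y) $ m = 0\<^sub>v (k+1) $ m" using m by simp
    qed (simp add: y_def N_def)
    moreover have "y \<noteq> 0\<^sub>v (k+1)"
    proof
      assume "y = 0\<^sub>v (k+1)"
      then have "y $ 0 = 0" by simp
      then show False by (simp add: y_def)
    qed
    moreover have "y \<in> carrier_vec (k+1)" by (simp add: y_def)
    ultimately have "Determinant.det (transpose_mat N) = 0"
      using det_0_iff_vec_prod_zero[of "transpose_mat N" "k+1"] Nc by auto
    then show ?thesis using det_transpose[OF Nc] by simp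
  qed
  have md: "Determinant.det (mat_delete N 0 m) = Dv k (take m vs @ drop (Suc m) vs)" if m: "m < k + 1" for m
    unfolding Dv_def
    apply (rule arg_cong[where f=Determinant.det])
    apply (rule eq_matI)
    using m lvs by (auto simp: mat_delete_def N_def del_nth)
  have zero: "N $$ (0,m) = 0" if m: "m < K" for m
  proof -
    have "N $$ (0,m) = Dv k (ws@[ws!m,d])" using m kK by (simp add: N_def \<phi>_def vs_def nth_append K_def)
    also have "\<dots> = 0" unfolding Dv_def
    proof (rule det_identical_columns[of _ k m K])
      show "col (Matrix.mat k k (\<lambda>(i, j). ((ws @ [ws ! m, d]) ! j) i)) m =
            col (Matrix.mat k k (\<lambda>(i, j). ((ws @ [ws ! m, d]) ! j) i)) K"
        using m kK by (intro eq_vecI) (auto simp: nth_append K_def)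
    qed (use m kK in auto)
    finally show ?thesis .
  qed
  have "Determinant.det N = (\<Sum>m<k+1. N $$ (0,m) * cofactor N 0 m)"
    by (rule laplace_expansion_row[OF Nc], simp)
  also have "\<dots> = (\<Sum>m<Suc (Suc (Suc K)). N $$ (0,m) * cofactor N 0 m)" using kK by simp
  also have "\<dots> = N $$ (0,K) * cofactor N 0 K + N $$ (0,K+1) * cofactor N 0 (K+1)
      + N $$ (0,K+2) * cofactor N 0 (K+2)"
    using zero by simp
  also have "\<dots> = (-1)^K * (\<phi> a * Dv k (ws@[b,c]) - \<phi> b * Dv k (ws@[a,c]) + \<phi> c * Dv k (ws@[a,b]))"
  proof -
    have "N $$ (0,K) = \<phi> a" "N $$ (0,K+1) = \<phi> b" "N $$ (0,K+2) = \<phi> c"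
      using kK by (simp_all add: N_def vs_def nth_append K_def)
    moreover have "cofactor N 0 K = (-1)^K * Dv k (ws@[b,c])"
      unfolding cofactor_def using md[of K] kK by (simp add: vs_def K_def)
    moreover have "cofactor N 0 (K+1) = - ((-1)^K * Dv k (ws@[a,c]))"
      unfolding cofactor_def using md[of "K+1"] kK by (simp add: vs_def K_def)
    moreover have "cofactor N 0 (K+2) = (-1)^K * Dv k (ws@[a,b])"
      unfolding cofactor_def using md[of "K+2"] kK by (simp add: vs_def K_def)
    ultimately show ?thesis by (simp add: algebra_simps)
  qed
  finally have "(-1)^K * (\<phi> a * Dv k (ws@[b,c]) - \<phi> b * Dv k (ws@[a,c]) + \<phi> c * Dv k (ws@[a,b])) = (0::'a)"
    using detN by simp
  then show ?thesis unfolding \<phi>_def by simp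
qed

definition tm :: "'a::linorder \<Rightarrow> 'a \<Rightarrow> 'a \<Rightarrow> bool" where
  "tm x y z \<longleftrightarrow> \<not>(x<y \<and> x<z) \<and> \<not>(y<x \<and> y<z) \<and> \<not>(z<x \<and> z<y)"

lemma tm_let:
  fixes x y z :: real
  shows "(let m = min x (min y z) in (x = m \<and> y = m) \<or> (x = m \<and> z = m) \<or> (y = m \<and> z = m))
     \<longleftrightarrow> tm x y z"
  unfolding Let_def tm_def min_def by auto

lemma val_tm:
  fixes x y z :: "'a::idom fls"
  assumes "x \<noteq> 0" "y \<noteq> 0" "z \<noteq> 0" "x + y + z = 0"
  shows "tm (fls_subdegree x) (fls_subdegree y) (fls_subdegree z)"
proof -
  have gen: "\<not> (fls_subdegree p < fls_subdegree q \<and> fls_subdegree p < fls_subdegree r)"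
    if "p \<noteq> 0" "p + q + r = 0" for p q r :: "'a fls"
  proof
    assume h: "fls_subdegree p < fls_subdegree q \<and> fls_subdegree p < fls_subdegree r"
    have "q + r = - p" using that(2) by (simp add: algebra_simps eq_neg_iff_add_eq_0)
    then have "q + r \<noteq> 0" using that(1) by simp
    from fls_plus_subdegree[OF this] have "fls_subdegree (q + r) \<ge> min (fls_subdegree q) (fls_subdegree r)" .
    moreover have "fls_subdegree (q + r) = fls_subdegree p" using \<open>q + r = - p\<close> by simp
    ultimately show False using h by linarith
  qed
  show ?thesis unfolding tm_def
    using gen[of x y z] gen[of y x z] gen[of z x y] assms by (auto simp: algebra_simps)
qed

lemma tm_scale:
  fixes a b c :: int and N :: real
  assumes "tm a b c" "N > 0"
  shows "tm (real_of_int a / N) (real_of_int b / N) (real_of_int c / N)"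
  using assms unfolding tm_def by (auto simp: divide_strict_right_mono_neg divide_less_cancel)

lemma tm_closed:
  fixes x y z :: real
  assumes "\<And>e. e > 0 \<Longrightarrow> \<exists>x' y' z'. \<bar>x - x'\<bar> < e \<and> \<bar>y - y'\<bar> < e \<and> \<bar>z - z'\<bar> < e \<and> tm x' y' z'"
  shows "tm x y z"
proof -
  have gen: "\<not> (p < q \<and> p < r)"
    if "\<And>e. e > 0 \<Longrightarrow> \<exists>p' q' r'. \<bar>p - p'\<bar> < e \<and> \<bar>q - q'\<bar> < e \<and> \<bar>r - r'\<bar> < e \<and> \<not> (p' < q' \<and> p' < r')"
    for p q r :: real
  proof
    assume h: "p < q \<and> p < r"
    define e where "e = min (q - p) (r - p) / 2"
    have "e > 0" using h by (simp add: e_def)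
    from that[OF this] obtain p' q' r' where "\<bar>p - p'\<bar> < e" "\<bar>q - q'\<bar> < e" "\<bar>r - r'\<bar> < e" "\<not> (p' < q' \<and> p' < r')"
      by blast
    moreover have "e \<le> (q - p)/2" "e \<le> (r - p)/2" unfolding e_def by auto
    ultimately show False by (auto simp: abs_less_iff)
  qed
  have 1: "\<not> (x < y \<and> x < z)"
    by (rule gen) (use assms in \<open>fastforce simp: tm_def\<close>)
  have 2: "\<not> (y < x \<and> y < z)"
    by (rule gen) (use assms in \<open>fastforce simp: tm_def\<close>)
  have 3: "\<not> (z < x \<and> z < y)"
    by (rule gen) (use assms in \<open>fastforce simp: tm_def\<close>)
  show ?thesis using 1 2 3 unfolding tm_def by blast
qed

lemma kset_insert2:
  assumes S: "S \<in> ksubsets (k-2) n" and k: "2 \<le> k" and "x \<notin> S" "y \<notin> S" "x \<noteq> y" "x < n" "y < n"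
  shows "insert x (insert y S) \<in> ksubsets k n"
proof -
  have fin: "finite S" using S unfolding ksubsets_def using finite_subset by blast
  show ?thesis using S assms fin unfolding ksubsets_def by auto
qed

lemma realizable_tm:
  fixes \<sigma> :: "nat set \<Rightarrow> real"
  assumes sig: "\<sigma> \<in> trop_gr_realizable k n" and k: "2 \<le> k"
    and S: "S \<in> ksubsets (k-2) n" and abcd: "a < b" "b < c" "c < d" "d < n"
    and nS: "a \<notin> S" "b \<notin> S" "c \<notin> S" "d \<notin> S"
  shows "tm (\<sigma> (insert a (insert b S)) + \<sigma> (insert c (insert d S)))
            (\<sigma> (insert a (insert c S)) + \<sigma> (insert b (insert d S)))
            (\<sigma> (insert a (insert d S)) + \<sigma> (insert b (insert c S)))"
proof -
  obtain N :: nat and M :: "nat \<Rightarrow> nat \<Rightarrow> complex fls" where N: "N \<ge> 1" and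
    MI: "\<And>I. I \<in> ksubsets k n \<Longrightarrow> minor k M I \<noteq> 0 \<and>
          \<sigma> I = real_of_int (fls_subdegree (minor k M I)) / real N"
    using sig unfolding trop_gr_realizable_def by blast
  have fin: "finite S" and cS: "card S = k - 2" using S unfolding ksubsets_def using finite_subset by auto
  define cl where "cl x = (\<lambda>i. M i x)" for x
  define ws where "ws = map cl (sorted_list_of_set S)"
  have lws: "length ws = k - 2" unfolding ws_def using cS by simp
  define X where "X x y = Dv k (ws @ [cl x, cl y])" for x y
  have key: "X x y \<noteq> 0 \<and> \<sigma> (insert x (insert y S)) = real_of_int (fls_subdegree (X x y)) / real N"
    if xy: "x \<notin> S" "y \<notin> S" "x \<noteq> y" "x < n" "y < n" for x y
  proof -
    have I: "insert x (insert y S) \<in> ksubsets k n" by (rule kset_insert2[OF S k xy])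
    have cI: "card (insert x (insert y S)) = k" using I unfolding ksubsets_def by simp
    have "mset (map cl (sorted_list_of_set (insert x (insert y S)))) = mset (ws @ [cl x, cl y])"
      unfolding ws_def using fin xy by (simp add: mset_set.insert_remove)
    then have "Dv k (map cl (sorted_list_of_set (insert x (insert y S)))) = X x y \<or>
               Dv k (map cl (sorted_list_of_set (insert x (insert y S)))) = - X x y"
      unfolding X_def by (rule Dv_mset) (use lws k in simp)
    then have "minor k M (insert x (insert y S)) = X x y \<or> minor k M (insert x (insert y S)) = - X x y"
      using minor_Dv[OF cI, of M] unfolding cl_def by simp
    then show ?thesis using MI[OF I] by auto
  qed
  have rel: "X a d * X b c - X b d * X a c + X c d * X a b = 0"
    unfolding X_def by (rule plucker3[OF lws k])
  define P1 where "P1 = X a b * X c d"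
  define P2 where "P2 = X a c * X b d"
  define P3 where "P3 = X a d * X b c"
  have k1: "X a b \<noteq> 0 \<and> \<sigma> (insert a (insert b S)) = real_of_int (fls_subdegree (X a b)) / real N"
    using key abcd nS by simp
  have k2: "X c d \<noteq> 0 \<and> \<sigma> (insert c (insert d S)) = real_of_int (fls_subdegree (X c d)) / real N"
    using key abcd nS by simp
  have k3: "X a c \<noteq> 0 \<and> \<sigma> (insert a (insert c S)) = real_of_int (fls_subdegree (X a c)) / real N"
    using key abcd nS by simp
  have k4: "X b d \<noteq> 0 \<and> \<sigma> (insert b (insert d S)) = real_of_int (fls_subdegree (X b d)) / real N"
    using key abcd nS by simp
  have k5: "X a d \<noteq> 0 \<and> \<sigma> (insert a (insert d S)) = real_of_int (fls_subdegree (X a d)) / real N"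
    using key abcd nS by simp
  have k6: "X b c \<noteq> 0 \<and> \<sigma> (insert b (insert c S)) = real_of_int (fls_subdegree (X b c)) / real N"
    using key abcd nS by simp
  have "tm (fls_subdegree P1) (fls_subdegree (-P2)) (fls_subdegree P3)"
    by (rule val_tm) (use k1 k2 k3 k4 k5 k6 rel k in \<open>auto simp: P1_def P2_def P3_def algebra_simps\<close>)
  then have "tm (real_of_int (fls_subdegree P1) / real N) (real_of_int (fls_subdegree P2) / real N)
      (real_of_int (fls_subdegree P3) / real N)"
    using tm_scale[of _ _ _ "real N"] N by simp
  then show ?thesis
    using k1 k2 k3 k4 k5 k6 by (simp add: P1_def P2_def P3_def add_divide_distrib)
qed

lemma trop_gr_dressian:
  assumes "\<pi> \<in> trop_gr k n" "2 \<le> k"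
  shows "\<pi> \<in> dressian k n"
  unfolding dressian_def
proof (intro CollectI allI impI)
  fix S a b c d
  assume h: "S \<in> ksubsets (k - 2) n \<and> a < b \<and> b < c \<and> c < d \<and> d < n \<and> a \<notin> S \<and> b \<notin> S \<and> c \<notin> S \<and> d \<notin> S"
  let ?x = "\<lambda>\<sigma>::nat set \<Rightarrow> real. \<sigma> (insert a (insert b S)) + \<sigma> (insert c (insert d S))"
  let ?y = "\<lambda>\<sigma>::nat set \<Rightarrow> real. \<sigma> (insert a (insert c S)) + \<sigma> (insert b (insert d S))"
  let ?z = "\<lambda>\<sigma>::nat set \<Rightarrow> real. \<sigma> (insert a (insert d S)) + \<sigma> (insert b (insert c S))"
  have "tm (?x \<pi>) (?y \<pi>) (?z \<pi>)"
  proof (rule tm_closed)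
    fix e :: real assume e: "e > 0"
    then obtain \<sigma> where sig: "\<sigma> \<in> trop_gr_realizable k n" and cl: "\<forall>I\<in>ksubsets k n. \<bar>\<pi> I - \<sigma> I\<bar> < e/2"
    proof -
      have "e/2 > 0" using e by simp
      then show ?thesis using assms(1) that unfolding trop_gr_def by blast
    qed
    have S: "S \<in> ksubsets (k-2) n" using h by blast
    have ks: "insert x (insert y S) \<in> ksubsets k n" if "x \<notin> S" "y \<notin> S" "x \<noteq> y" "x < n" "y < n" for x y
      by (rule kset_insert2[OF S assms(2) that])
    have c1: "\<bar>\<pi> (insert x (insert y S)) - \<sigma> (insert x (insert y S))\<bar> < e/2"
      if "x \<notin> S" "y \<notin> S" "x \<noteq> y" "x < n" "y < n" for x y
      using cl ks[OF that] by blast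
    have "\<bar>?x \<pi> - ?x \<sigma>\<bar> < e" proof -
      have "\<bar>\<pi> (insert a (insert b S)) - \<sigma> (insert a (insert b S))\<bar> < e/2" using c1[of a b] h by auto
      moreover have "\<bar>\<pi> (insert c (insert d S)) - \<sigma> (insert c (insert d S))\<bar> < e/2" using c1[of c d] h by auto
      ultimately show ?thesis by arith
    qed
    moreover have "\<bar>?y \<pi> - ?y \<sigma>\<bar> < e" proof -
      have "\<bar>\<pi> (insert a (insert c S)) - \<sigma> (insert a (insert c S))\<bar> < e/2" using c1[of a c] h by auto
      moreover have "\<bar>\<pi> (insert b (insert d S)) - \<sigma> (insert b (insert d S))\<bar> < e/2" using c1[of b d] h by auto
      ultimately show ?thesis by arith
    qed
    moreover have "\<bar>?z \<pi> - ?z \<sigma>\<bar> < e" proof -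
      have "\<bar>\<pi> (insert a (insert d S)) - \<sigma> (insert a (insert d S))\<bar> < e/2" using c1[of a d] h by auto
      moreover have "\<bar>\<pi> (insert b (insert c S)) - \<sigma> (insert b (insert c S))\<bar> < e/2" using c1[of b c] h by auto
      ultimately show ?thesis by arith
    qed
    moreover have "tm (?x \<sigma>) (?y \<sigma>) (?z \<sigma>)"
      using realizable_tm[OF sig assms(2) S] h by blast
    ultimately show "\<exists>x' y' z'. \<bar>?x \<pi> - x'\<bar> < e \<and> \<bar>?y \<pi> - y'\<bar> < e \<and> \<bar>?z \<pi> - z'\<bar> < e \<and> tm x' y' z'"
      by blast
  qed
  then show "let x = ?x \<pi>; y = ?y \<pi>; z = ?z \<pi>; m = min x (min y z)
        in x = m \<and> y = m \<or> x = m \<and> z = m \<or> y = m \<and> z = m"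
    using tm_let by (simp add: Let_def)
qed



section \<open>Generic walk lemmas\<close>

lemma walk_trans:
  assumes "walk_cost k E x y c1" "walk_cost k E y w c2"
  shows "walk_cost k E x w (c1 + c2)"
  using assms
proof (induction rule: walk_cost.induct)
  case (nil v) then show ?case by simp
next
  case (fwd v u w' c)
  then have "walk_cost k E v w ((c + c2) + 1)" by (intro walk_cost.fwd) auto
  then show ?case by (simp add: ac_simps)
next
  case (bwd u v w' c)
  then have "walk_cost k E v w ((c + c2) + (k - 1))" by (intro walk_cost.bwd) auto
  then show ?case by (simp add: ac_simps)
qed

lemma walk_pot:
  fixes \<phi> :: "nat \<Rightarrow> int"
  assumes lip: "\<And>u v. (u, v) \<in> E \<Longrightarrow> \<phi> u \<le> \<phi> v + 1 \<and> \<phi> v \<le> \<phi> u + int (k - 1)"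
  assumes "walk_cost k E x y c"
  shows "\<phi> x \<le> \<phi> y + int c"
  using assms(2)
proof (induction rule: walk_cost.induct)
  case (nil v) then show ?case by simp
next
  case (fwd v u w c) then show ?case using lip[of v u] by simp
next
  case (bwd u v w c) then show ?case using lip[of u v] by simp
qed

lemma walk_height:
  fixes h :: "nat \<Rightarrow> int"
  assumes he: "\<And>u v. (u, v) \<in> E \<Longrightarrow> h v = h u + 1"
  assumes "walk_cost k E x y c"
  shows "k - 1 \<le> c \<or> h y = h x + int c"
  using assms(2)
proof (induction rule: walk_cost.induct)
  case (nil v) then show ?case by simp
next
  case (fwd v u w c) then show ?case using he[of v u] by auto
next
  case (bwd u v w c) then show ?case by simp
qed

lemma ddist_le: "walk_cost k E x y c \<Longrightarrow> ddist k E x y \<le> c"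
  unfolding ddist_def by (rule Least_le)

lemma ddist_walk: "walk_cost k E x y c \<Longrightarrow> walk_cost k E x y (ddist k E x y)"
  unfolding ddist_def by (rule LeastI)

lemma ddist_pot:
  fixes \<phi> :: "nat \<Rightarrow> int"
  assumes lip: "\<And>u v. (u, v) \<in> E \<Longrightarrow> \<phi> u \<le> \<phi> v + 1 \<and> \<phi> v \<le> \<phi> u + int (k - 1)"
  assumes "walk_cost k E x y c"
  shows "\<phi> x - \<phi> y \<le> int (ddist k E x y)"
  using walk_pot[where \<phi>=\<phi> and E=E and k=k, OF lip ddist_walk[OF assms(2)]] by simp

section \<open>Vertex encoding\<close>

definition leaf :: "nat \<Rightarrow> nat" where "leaf i = prod_encode (0, i)"
definition hub :: "nat set \<Rightarrow> nat" where "hub I = prod_encode (1, set_encode I)"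
definition mid :: "nat set \<Rightarrow> nat \<Rightarrow> nat \<Rightarrow> nat" where
  "mid I i t = prod_encode (2, prod_encode (set_encode I, prod_encode (i, t)))"

definition vfun :: "(nat \<Rightarrow> 'b) \<Rightarrow> (nat set \<Rightarrow> 'b) \<Rightarrow> (nat set \<Rightarrow> nat \<Rightarrow> nat \<Rightarrow> 'b) \<Rightarrow> nat \<Rightarrow> 'b" where
  "vfun fl fh fm v = (let (tg, x) = prod_decode v in
     if tg = 0 then fl x else if tg = 1 then fh (set_decode x) else
     (let (a, y) = prod_decode x; (i, t) = prod_decode y in fm (set_decode a) i t))"

lemma vfun_leaf[simp]: "vfun fl fh fm (leaf i) = fl i"
  by (simp add: vfun_def leaf_def)
lemma vfun_hub[simp]: "finite I \<Longrightarrow> vfun fl fh fm (hub I) = fh I"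
  by (simp add: vfun_def hub_def)
lemma vfun_mid[simp]: "finite I \<Longrightarrow> vfun fl fh fm (mid I i t) = fm I i t"
  by (simp add: vfun_def mid_def)

definition pnode :: "(nat set \<Rightarrow> nat) \<Rightarrow> nat set \<Rightarrow> nat \<Rightarrow> nat \<Rightarrow> nat" where
  "pnode L I i t = (if t = 0 then hub I else if t = L I then leaf i else mid I i t)"

lemma vfun_pnode:
  assumes "finite I" "t \<le> L I" "fm I i 0 = fh I" "fm I i (L I) = fl i"
  shows "vfun fl fh fm (pnode L I i t) = fm I i t"
  using assms by (auto simp: pnode_def)

lemma ksub_props:
  assumes "I \<in> ksubsets k n"
  shows "finite I" "I \<subseteq> {0..<n}" "card I = k"
  using assms unfolding ksubsets_def by (auto intro: finite_subset)

lemma ksub_finite: "finite (ksubsets k n)"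
proof -
  have "ksubsets k n \<subseteq> Pow {0..<n}" unfolding ksubsets_def by auto
  then show ?thesis by (rule finite_subset) simp
qed

lemma exists_ksub:
  assumes "i < n" "j < n" "2 \<le> k" "k \<le> n"
  shows "\<exists>I\<in>ksubsets k n. i \<in> I \<and> j \<in> I"
proof -
  define B where "B = {i, j}"
  have cB: "card B \<le> 2" unfolding B_def by (cases "i = j") auto
  have Bs: "B \<subseteq> {0..<n}" using assms unfolding B_def by auto
  have "card ({0..<n} - B) = n - card B" using Bs by (subst card_Diff_subset) (auto simp: B_def)
  then have "k - card B \<le> card ({0..<n} - B)" using assms by simp
  then obtain C where C: "C \<subseteq> {0..<n} - B" "card C = k - card B" "finite C"
    by (rule obtain_subset_with_card_n)
  have "card (B \<union> C) = card B + card C"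
    by (rule card_Un_disjoint) (use C in \<open>auto simp: B_def\<close>)
  then have "card (B \<union> C) = k" using C(2) cB assms(3) by linarith
  moreover have "B \<union> C \<subseteq> {0..<n}" using C Bs by auto
  ultimately have BC: "B \<union> C \<in> ksubsets k n" unfolding ksubsets_def by blast
  have ij: "i \<in> B \<union> C" "j \<in> B \<union> C" by (auto simp: B_def)
  show ?thesis by (rule bexI[where x="B \<union> C" and P="\<lambda>I. i \<in> I \<and> j \<in> I", OF conjI[OF ij] BC])
qed

definition Ecq :: "nat \<Rightarrow> nat \<Rightarrow> (nat set \<Rightarrow> nat) \<Rightarrow> (nat \<times> nat) set" where
  "Ecq k n L = (\<Union>I\<in>ksubsets k n. \<Union>i\<in>I. (\<lambda>t. (pnode L I i t, pnode L I i (Suc t))) ` {..<L I})"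

definition Vq :: "nat \<Rightarrow> nat \<Rightarrow> (nat set \<Rightarrow> nat) \<Rightarrow> nat set" where
  "Vq k n L = (\<Union>I\<in>ksubsets k n. \<Union>i\<in>I. pnode L I i ` {..L I})"

definition hq :: "(nat set \<Rightarrow> nat) \<Rightarrow> nat \<Rightarrow> int" where
  "hq L = vfun (\<lambda>i. 0) (\<lambda>I. - int (L I)) (\<lambda>I i t. int t - int (L I))"

definition Lm :: "nat \<Rightarrow> nat \<Rightarrow> (nat set \<Rightarrow> nat) \<Rightarrow> nat \<Rightarrow> nat \<Rightarrow> nat" where
  "Lm k n L i j = Min (L ` {X \<in> ksubsets k n. i \<in> X \<and> j \<in> X})"

definition lj :: "nat \<Rightarrow> nat \<Rightarrow> (nat set \<Rightarrow> nat) \<Rightarrow> nat \<Rightarrow> nat \<Rightarrow> int" where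
  "lj k n L j i = (if i = j then 0 else int k * int (Lm k n L i j))"

definition hj :: "nat \<Rightarrow> (nat set \<Rightarrow> nat) \<Rightarrow> nat \<Rightarrow> nat \<Rightarrow> nat set \<Rightarrow> int" where
  "hj k L M j I = (if j \<in> I then int (L I) else int (k + 1) * int M)"

definition psi :: "nat \<Rightarrow> nat \<Rightarrow> (nat set \<Rightarrow> nat) \<Rightarrow> nat \<Rightarrow> nat \<Rightarrow> nat set \<Rightarrow> nat \<Rightarrow> nat \<Rightarrow> int" where
  "psi k n L M j I i t = min (hj k L M j I + int (k - 1) * int t) (lj k n L j i + int (L I) - int t)"

definition phi :: "nat \<Rightarrow> nat \<Rightarrow> (nat set \<Rightarrow> nat) \<Rightarrow> nat \<Rightarrow> nat \<Rightarrow> nat \<Rightarrow> int" where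
  "phi k n L M j = vfun (lj k n L j) (hj k L M j) (psi k n L M j)"

lemma min_lip:
  fixes a b c l t :: int
  assumes "0 \<le> c"
  shows "min (a + c * t) (b + l - t) \<le> min (a + c * (t + 1)) (b + l - (t + 1)) + 1 \<and>
         min (a + c * (t + 1)) (b + l - (t + 1)) \<le> min (a + c * t) (b + l - t) + c"
  using assms by (auto simp: min_def algebra_simps)

context
  fixes k n :: nat and L :: "nat set \<Rightarrow> nat" and M A :: nat
  assumes k2: "2 \<le> k" and kn: "k < n"
    and Lrange: "\<And>I. I \<in> ksubsets k n \<Longrightarrow> M \<le> L I \<and> L I \<le> M + A"
    and MA: "k * A + 1 \<le> M"
begin

lemma Lpos: "I \<in> ksubsets k n \<Longrightarrow> 1 \<le> L I"
  using Lrange[of I] MA by auto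

lemma hq_pnode: "I \<in> ksubsets k n \<Longrightarrow> t \<le> L I \<Longrightarrow> hq L (pnode L I i t) = int t - int (L I)"
  unfolding hq_def by (rule vfun_pnode) (auto dest: ksub_props)

lemma hq_edge: "(u, v) \<in> Ecq k n L \<Longrightarrow> hq L v = hq L u + 1"
  unfolding Ecq_def by (auto simp: hq_pnode)

lemma fwd_walk:
  assumes I: "I \<in> ksubsets k n" and i: "i \<in> I"
  shows "t + s \<le> L I \<Longrightarrow> walk_cost k (Ecq k n L) (pnode L I i t) (pnode L I i (t + s)) s"
proof (induction s)
  case 0 then show ?case by (simp add: walk_cost.nil)
next
  case (Suc s)
  then have w1: "walk_cost k (Ecq k n L) (pnode L I i t) (pnode L I i (t + s)) s" by simp
  have "(pnode L I i (t + s), pnode L I i (t + Suc s)) \<in> Ecq k n L"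
    unfolding Ecq_def
    by (rule UN_I[OF I], rule UN_I[OF i], rule image_eqI[where x="t+s"]) (use Suc.prems in auto)
  then have "walk_cost k (Ecq k n L) (pnode L I i (t + s)) (pnode L I i (t + Suc s)) (0 + 1)"
    by (rule walk_cost.fwd[OF _ walk_cost.nil])
  from walk_trans[OF w1 this] show ?case by simp
qed

lemma bwd_walk:
  assumes I: "I \<in> ksubsets k n" and i: "i \<in> I"
  shows "t + s \<le> L I \<Longrightarrow> walk_cost k (Ecq k n L) (pnode L I i (t + s)) (pnode L I i t) (s * (k - 1))"
proof (induction s)
  case 0 then show ?case by (simp add: walk_cost.nil)
next
  case (Suc s)
  then have w1: "walk_cost k (Ecq k n L) (pnode L I i (t + s)) (pnode L I i t) (s * (k - 1))" by simp
  have "(pnode L I i (t + s), pnode L I i (t + Suc s)) \<in> Ecq k n L"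
    unfolding Ecq_def
    by (rule UN_I[OF I], rule UN_I[OF i], rule image_eqI[where x="t+s"]) (use Suc.prems in auto)
  then have "walk_cost k (Ecq k n L) (pnode L I i (t + Suc s)) (pnode L I i (t + s)) (0 + (k - 1))"
    by (rule walk_cost.bwd[OF _ walk_cost.nil])
  from walk_trans[OF this w1]
  have w: "walk_cost k (Ecq k n L) (pnode L I i (t + Suc s)) (pnode L I i t) ((0 + (k - 1)) + s * (k - 1))" .
  have eq: "(0 + (k - 1)) + s * (k - 1) = Suc s * (k - 1)" by simp
  show ?case using w unfolding eq .
qed

lemma pnode0: "pnode L I i 0 = hub I" by (simp add: pnode_def)
lemma pnodeL: "I \<in> ksubsets k n \<Longrightarrow> pnode L I i (L I) = leaf i"
  using Lpos[of I] by (simp add: pnode_def)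

lemma hub_to: "I \<in> ksubsets k n \<Longrightarrow> i \<in> I \<Longrightarrow> t \<le> L I \<Longrightarrow> \<exists>c. walk_cost k (Ecq k n L) (hub I) (pnode L I i t) c"
  using fwd_walk[of I i 0 t] by (auto simp: pnode0)

lemma to_hub: "I \<in> ksubsets k n \<Longrightarrow> i \<in> I \<Longrightarrow> t \<le> L I \<Longrightarrow> \<exists>c. walk_cost k (Ecq k n L) (pnode L I i t) (hub I) c"
  using bwd_walk[of I i 0 t] by (auto simp: pnode0)

lemma hub_hub: "I \<in> ksubsets k n \<Longrightarrow> J \<in> ksubsets k n \<Longrightarrow> \<exists>c. walk_cost k (Ecq k n L) (hub I) (hub J) c"
proof -
  assume I: "I \<in> ksubsets k n" and J: "J \<in> ksubsets k n"
  have "I \<noteq> {}" "J \<noteq> {}" using ksub_props(3)[OF I] ksub_props(3)[OF J] k2 by auto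
  then obtain i j where ij: "i \<in> I" "j \<in> J" by blast
  then have "i < n" "j < n" using ksub_props(2)[OF I] ksub_props(2)[OF J] by auto
  then obtain X where X: "X \<in> ksubsets k n" "i \<in> X" "j \<in> X" using exists_ksub[where i=i and j=j and n=n and k=k] k2 kn by auto
  obtain c1 where "walk_cost k (Ecq k n L) (hub I) (pnode L I i (L I)) c1" using hub_to[OF I ij(1)] by blast
  then have w1: "walk_cost k (Ecq k n L) (hub I) (leaf i) c1" using pnodeL[OF I] by simp
  obtain c2 where "walk_cost k (Ecq k n L) (pnode L X i (L X)) (hub X) c2" using to_hub[OF X(1,2)] by blast
  then have w2: "walk_cost k (Ecq k n L) (leaf i) (hub X) c2" using pnodeL[OF X(1)] by simp
  obtain c3 where "walk_cost k (Ecq k n L) (hub X) (pnode L X j (L X)) c3" using hub_to[OF X(1,3)] by blast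
  then have w3: "walk_cost k (Ecq k n L) (hub X) (leaf j) c3" using pnodeL[OF X(1)] by simp
  obtain c4 where "walk_cost k (Ecq k n L) (pnode L J j (L J)) (hub J) c4" using to_hub[OF J ij(2)] by blast
  then have w4: "walk_cost k (Ecq k n L) (leaf j) (hub J) c4" using pnodeL[OF J] by simp
  show ?thesis using walk_trans[OF walk_trans[OF walk_trans[OF w1 w2] w3] w4] by blast
qed

lemma Vq_connected:
  assumes "v \<in> Vq k n L" "w \<in> Vq k n L"
  shows "\<exists>c. walk_cost k (Ecq k n L) v w c"
proof -
  obtain I i t where v: "I \<in> ksubsets k n" "i \<in> I" "t \<le> L I" "v = pnode L I i t"
    using assms(1) unfolding Vq_def by auto
  obtain J j s where w: "J \<in> ksubsets k n" "j \<in> J" "s \<le> L J" "w = pnode L J j s"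
    using assms(2) unfolding Vq_def by auto
  obtain c1 where w1: "walk_cost k (Ecq k n L) v (hub I) c1" using to_hub[OF v(1-3)] v(4) by blast
  obtain c2 where w2: "walk_cost k (Ecq k n L) (hub I) (hub J) c2" using hub_hub[OF v(1) w(1)] by blast
  obtain c3 where w3: "walk_cost k (Ecq k n L) (hub J) w c3" using hub_to[OF w(1-3)] w(4) by blast
  show ?thesis using walk_trans[OF walk_trans[OF w1 w2] w3] by blast
qed

lemma Vq_finite: "finite (Vq k n L)"
  unfolding Vq_def using ksub_finite by (auto intro!: finite_UN_I dest: ksub_props(1))

lemma Ecq_sub: "Ecq k n L \<subseteq> Vq k n L \<times> Vq k n L"
  unfolding Ecq_def Vq_def by fastforce

lemma edge_dist:
  assumes e: "(v, w) \<in> Ecq k n L"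
  shows "ddist k (Ecq k n L) v w = 1 \<and> ddist k (Ecq k n L) w v = k - 1"
proof
  have hw: "hq L w = hq L v + 1" by (rule hq_edge[OF e])
  have w1: "walk_cost k (Ecq k n L) v w (0 + 1)" by (intro walk_cost.fwd[OF e] walk_cost.nil)
  show "ddist k (Ecq k n L) v w = 1" unfolding ddist_def
  proof (rule Least_equality)
    show "walk_cost k (Ecq k n L) v w 1" using w1 by simp
  next
    fix c assume "walk_cost k (Ecq k n L) v w c"
    from walk_height[where h="hq L", OF hq_edge this] hw k2 show "1 \<le> c" by auto
  qed
  have w2: "walk_cost k (Ecq k n L) w v (0 + (k - 1))" by (intro walk_cost.bwd[OF e] walk_cost.nil)
  show "ddist k (Ecq k n L) w v = k - 1" unfolding ddist_def
  proof (rule Least_equality)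
    show "walk_cost k (Ecq k n L) w v (k - 1)" using w2 by simp
  next
    fix c assume "walk_cost k (Ecq k n L) w v c"
    from walk_height[where h="hq L", OF hq_edge this] hw show "k - 1 \<le> c" by auto
  qed
qed

lemma leaf_in_Vq: "i < n \<Longrightarrow> leaf i \<in> Vq k n L"
proof -
  assume i: "i < n"
  obtain X where X: "X \<in> ksubsets k n" "i \<in> X" using exists_ksub[where i=i and j=i and n=n and k=k] i k2 kn by auto
  have "pnode L X i (L X) \<in> Vq k n L" unfolding Vq_def using X by auto
  then show ?thesis using pnodeL[OF X(1)] by simp
qed

lemma valid_q: "valid_quiver k n (Vq k n L) (Ecq k n L) leaf"
  unfolding valid_quiver_def
proof (intro conjI ballI allI)
  show "finite (Vq k n L)" by (rule Vq_finite)
  show "Ecq k n L \<subseteq> Vq k n L \<times> Vq k n L" by (rule Ecq_sub)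
  show "(v, v) \<notin> Ecq k n L" for v using hq_edge[of v v] by auto
  show "i < n \<longrightarrow> leaf i \<in> Vq k n L" for i using leaf_in_Vq by blast
  show "\<exists>c. walk_cost k (Ecq k n L) v w c" if "v \<in> Vq k n L" "w \<in> Vq k n L" for v w
    using Vq_connected that by blast
  show "case x of (v, w) \<Rightarrow> ddist k (Ecq k n L) v w = 1 \<and> ddist k (Ecq k n L) w v = k - 1"
    if "x \<in> Ecq k n L" for x using edge_dist that by auto
qed

lemma Lm_props:
  assumes "i < n" "j < n"
  shows "M \<le> Lm k n L i j \<and> Lm k n L i j \<le> M + A"
proof -
  let ?S = "{X \<in> ksubsets k n. i \<in> X \<and> j \<in> X}"
  have fin: "finite (L ` ?S)" using ksub_finite by auto
  have ne: "?S \<noteq> {}" using exists_ksub[where i=i and j=j and n=n and k=k] assms k2 kn by auto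
  then have "Min (L ` ?S) \<in> L ` ?S" using fin by (intro Min_in) auto
  then obtain X where X: "X \<in> ?S" "Lm k n L i j = L X" unfolding Lm_def by auto
  then show ?thesis using Lrange[of X] by auto
qed

lemma Lm_le:
  assumes "X \<in> ksubsets k n" "i \<in> X" "j \<in> X"
  shows "Lm k n L i j \<le> L X"
proof -
  have fin: "finite (L ` {X \<in> ksubsets k n. i \<in> X \<and> j \<in> X})" using ksub_finite by auto
  show ?thesis unfolding Lm_def by (rule Min_le[OF fin]) (use assms in auto)
qed

lemma Lm_k2:
  assumes "k = 2" "X \<in> ksubsets k n" "i \<in> X" "j \<in> X" "i \<noteq> j"
  shows "Lm k n L i j = L X"
proof -
  have "card X = 2" using ksub_props(3)[OF assms(2)] assms(1) by simp
  moreover have "finite X" using ksub_props(1)[OF assms(2)] .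
  moreover have "card {i, j} = 2" using assms(5) by simp
  ultimately have Xe: "X = {i, j}" using assms(3,4) by (metis card_subset_eq empty_subsetI insert_subset)
  have "{Y \<in> ksubsets k n. i \<in> Y \<and> j \<in> Y} = {X}"
  proof (intro equalityI subsetI)
    fix Y assume Y: "Y \<in> {Y \<in> ksubsets k n. i \<in> Y \<and> j \<in> Y}"
    then have "card Y = 2" using ksub_props(3) assms(1) by auto
    moreover have "finite Y" using Y ksub_props(1) by auto
    moreover have "card {i, j} = 2" using assms(5) by simp
    ultimately have "Y = {i, j}" using Y by (metis (no_types, lifting) card_subset_eq empty_subsetI insert_subset mem_Collect_eq)
    then show "Y \<in> {X}" using Xe by simp
  qed (use assms in auto)
  then show ?thesis unfolding Lm_def by simp
qed

lemma Lm_bound: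
  assumes X: "X \<in> ksubsets k n" "i \<in> X" "j \<in> X" "i \<noteq> j"
  shows "k * L X \<le> k * Lm k n L i j + (k - 2) * M \<and> 2 * L X \<le> k * Lm k n L i j"
proof (cases "k = 2")
  case True then show ?thesis using Lm_k2[OF True X] by simp
next
  case False
  then have k3: "3 \<le> k" using k2 by simp
  have ij: "i < n" "j < n" using ksub_props(2)[OF X(1)] X by auto
  have lm: "M \<le> Lm k n L i j" using Lm_props[OF ij] by simp
  have lx: "L X \<le> M + A" using Lrange[OF X(1)] by simp
  have a1: "k * M \<le> k * Lm k n L i j" using lm by simp
  have "1 \<le> k - 2" using k3 by simp
  then have a2: "M \<le> (k - 2) * M" using mult_le_mono1[of 1 "k - 2" M] by simp
  have a3: "3 * M \<le> k * M" using k3 by simp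
  have a4: "3 * A \<le> k * A" using k3 by simp
  have a5: "k * L X \<le> k * M + k * A" using lx
    by (metis add_mult_distrib2 mult_le_mono2)
  show ?thesis using a1 a2 a3 a4 a5 MA lx by linarith
qed

lemma psi0:
  assumes "I \<in> ksubsets k n" "i \<in> I" "j < n"
  shows "psi k n L M j I i 0 = hj k L M j I"
proof -
  have i: "i < n" using ksub_props(2)[OF assms(1)] assms(2) by auto
  have "hj k L M j I \<le> lj k n L j i + int (L I)"
  proof (cases "j \<in> I")
    case True then show ?thesis by (simp add: hj_def lj_def)
  next
    case False
    then have "i \<noteq> j" using assms by auto
    have f1: "k * M \<le> k * Lm k n L i j" using Lm_props[OF i assms(3)] by simp
    have f2: "M \<le> L I" using Lrange[OF assms(1)] by simp
    have "(k + 1) * M = k * M + M" by simp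
    then have "(k + 1) * M \<le> k * Lm k n L i j + L I" using f1 f2 by linarith
    then have "int ((k + 1) * M) \<le> int (k * Lm k n L i j + L I)" by (simp only: of_nat_le_iff)
    then have "int (k + 1) * int M \<le> int k * int (Lm k n L i j) + int (L I)" by (simp only: of_nat_mult of_nat_add)
    then show ?thesis using False \<open>i \<noteq> j\<close> unfolding hj_def lj_def by simp
  qed
  then show ?thesis unfolding psi_def by simp
qed

lemma psiL:
  assumes "I \<in> ksubsets k n" "i \<in> I" "j < n"
  shows "psi k n L M j I i (L I) = lj k n L j i"
proof -
  have i: "i < n" using ksub_props(2)[OF assms(1)] assms(2) by auto
  have "lj k n L j i \<le> hj k L M j I + int (k - 1) * int (L I)"
  proof (cases "i = j")
    case True then show ?thesis by (simp add: hj_def lj_def)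
  next
    case ij: False
    show ?thesis
    proof (cases "j \<in> I")
      case True
      have "Lm k n L i j \<le> L I" using Lm_le[OF assms(1,2) True] .
      then have "k * Lm k n L i j \<le> k * L I" by simp
      moreover have "k * L I = L I + (k - 1) * L I" using k2 by (cases k) auto
      ultimately have "int (k * Lm k n L i j) \<le> int (L I + (k - 1) * L I)" by (simp only: of_nat_le_iff)
      then have "int k * int (Lm k n L i j) \<le> int (L I) + int (k - 1) * int (L I)" by (simp only: of_nat_mult of_nat_add)
      then show ?thesis using ij True unfolding hj_def lj_def by simp
    next
      case False
      have lm: "Lm k n L i j \<le> M + A" using Lm_props[OF i assms(3)] by simp
      have "k * Lm k n L i j \<le> k * M + k * A" using lm by (metis add_mult_distrib2 mult_le_mono2)
      then have "k * Lm k n L i j \<le> (k + 1) * M + (k - 1) * L I" using MA by simp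
      then have "int (k * Lm k n L i j) \<le> int ((k + 1) * M + (k - 1) * L I)" by (simp only: of_nat_le_iff)
      then have "int k * int (Lm k n L i j) \<le> int (k + 1) * int M + int (k - 1) * int (L I)" by (simp only: of_nat_mult of_nat_add)
      then show ?thesis using ij False unfolding hj_def lj_def by simp
    qed
  qed
  then show ?thesis unfolding psi_def by simp
qed

lemma phi_pnode:
  assumes "I \<in> ksubsets k n" "i \<in> I" "j < n" "t \<le> L I"
  shows "phi k n L M j (pnode L I i t) = psi k n L M j I i t"
  unfolding phi_def
  by (rule vfun_pnode) (use assms psi0 psiL ksub_props(1) in auto)

lemma phi_leaf: "phi k n L M j (leaf j) = 0"
  unfolding phi_def by (simp add: lj_def)

lemma phi_lip:
  assumes j: "j < n" and e: "(u, v) \<in> Ecq k n L"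
  shows "phi k n L M j u \<le> phi k n L M j v + 1 \<and> phi k n L M j v \<le> phi k n L M j u + int (k - 1)"
proof -
  obtain I i t where I: "I \<in> ksubsets k n" "i \<in> I" "t < L I"
    and uv: "u = pnode L I i t" "v = pnode L I i (Suc t)"
    using e unfolding Ecq_def by auto
  have pu: "phi k n L M j u = psi k n L M j I i t" using phi_pnode[OF I(1,2) j] I uv by simp
  have pv: "phi k n L M j v = psi k n L M j I i (Suc t)" using phi_pnode[OF I(1,2) j, of "Suc t"] I uv by simp
  show ?thesis unfolding pu pv psi_def
    using min_lip[of "int (k - 1)" "hj k L M j I" "int t" "lj k n L j i" "int (L I)"] by (simp add: add.commute)
qed

lemma ddist_phi:
  assumes j: "j < n" and x: "x \<in> Vq k n L"
  shows "phi k n L M j x \<le> int (ddist k (Ecq k n L) x (leaf j))"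
proof -
  obtain c where "walk_cost k (Ecq k n L) x (leaf j) c" using Vq_connected[OF x leaf_in_Vq[OF j]] by blast
  from ddist_pot[where \<phi>="phi k n L M j", OF phi_lip[OF j] this] show ?thesis
    by (simp add: phi_leaf)
qed

lemma psi_ii:
  assumes "I \<in> ksubsets k n" "i \<in> I"
  shows "psi k n L M i I i t = int (L I) - int t"
proof -
  define T where "T = int (k - 1) * int t"
  have "0 \<le> T" unfolding T_def by simp
  then show ?thesis using assms unfolding psi_def hj_def lj_def T_def[symmetric] by (simp add: min_def)
qed

lemma psi_in:
  assumes I: "I \<in> ksubsets k n" "i \<in> I" "t \<le> L I" and j: "j \<in> I" "j \<noteq> i"
  shows "int (L I) + int t \<le> psi k n L M j I i t"
proof -
  have "2 * L I \<le> k * Lm k n L i j" using Lm_bound[OF I(1,2) j(1)] j by auto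
  then have b: "2 * int (L I) \<le> int k * int (Lm k n L i j)" by (metis of_nat_le_iff of_nat_mult of_nat_numeral)
  have c: "int t \<le> int (k - 1) * int t" using k2 by (simp add: mult_le_cancel_right1)
  show ?thesis unfolding psi_def hj_def lj_def using j b c I(3) by auto
qed

lemma psi_out:
  assumes I: "I \<in> ksubsets k n" "i \<in> I" "t \<le> L I" and j: "j \<notin> I" "j < n"
  shows "int k * int M \<le> psi k n L M j I i t \<and>
    (int (k + 1) * int M \<le> psi k n L M j I i t \<or>
     int k * int (Lm k n L i j) + int (L I) - int t \<le> psi k n L M j I i t)"
proof -
  have i: "i < n" using ksub_props(2)[OF I(1)] I(2) by auto
  have "k * M \<le> k * Lm k n L i j" using Lm_props[OF i j(2)] by simp
  then have a: "int k * int M \<le> int k * int (Lm k n L i j)" by (metis of_nat_le_iff of_nat_mult)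
  define T where "T = int (k - 1) * int t"
  have b: "0 \<le> T" unfolding T_def by simp
  have c: "int k * int M \<le> int (k + 1) * int M" by (simp add: mult_right_mono)
  have ij: "i \<noteq> j" using I(2) j(1) by auto
  define X where "X = int (k + 1) * int M + T"
  define Y where "Y = int k * int (Lm k n L i j) + int (L I) - int t"
  have ps: "psi k n L M j I i t = min X Y" unfolding psi_def hj_def lj_def X_def Y_def T_def using ij j by simp
  have "int k * int M \<le> X" unfolding X_def using b c by linarith
  moreover have "int k * int M \<le> Y" unfolding Y_def using a I(3) by linarith
  moreover have "int (k + 1) * int M \<le> X" unfolding X_def using b by linarith
  ultimately show ?thesis unfolding ps Y_def[symmetric] by (auto simp: min_def)
qed

lemma psi_ge_M:
  assumes I: "I \<in> ksubsets k n" "i \<in> I" "t \<le> L I" and j: "j < n" "j \<noteq> i"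
  shows "int M \<le> psi k n L M j I i t"
proof (cases "j \<in> I")
  case True
  then show ?thesis using psi_in[OF I True j(2)] Lrange[OF I(1)] by linarith
next
  case False
  have "int M \<le> int k * int M" using k2 by (simp add: mult_le_cancel_right1)
  then show ?thesis using psi_out[OF I False j(1)] by linarith
qed

lemma sum_bound:
  assumes I: "I \<in> ksubsets k n" "i \<in> I" "t \<le> L I" and J: "J \<in> ksubsets k n"
  shows "int k * int (L J) \<le> (\<Sum>j\<in>J. psi k n L M j I i t)"
proof -
  have finJ: "finite J" and cJ: "card J = k" and sJ: "J \<subseteq> {0..<n}" using ksub_props[OF J] by auto
  have finI: "finite I" and cI: "card I = k" using ksub_props[OF I(1)] by auto
  have LJ: "M \<le> L J" "L J \<le> M + A" using Lrange[OF J] by auto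
  have kA: "int k * int (L J) \<le> int k * int M + int k * int A"
  proof -
    have "k * L J \<le> k * M + k * A" using LJ(2) by (metis add_mult_distrib2 mult_le_mono2)
    then show ?thesis by (metis of_nat_add of_nat_le_iff of_nat_mult)
  qed
  have MA': "int k * int A + 1 \<le> int M" using MA by (metis of_nat_1 of_nat_add of_nat_le_iff of_nat_mult)
  show ?thesis
  proof (cases "J = I")
    case True
    have "(\<Sum>j\<in>J. psi k n L M j I i t) = psi k n L M i I i t + (\<Sum>j\<in>J - {i}. psi k n L M j I i t)"
      using True I(2) finJ by (simp add: sum.remove)
    moreover have "of_nat (card (J - {i})) * (int (L I) + int t) \<le> (\<Sum>j\<in>J - {i}. psi k n L M j I i t)"
      by (rule sum_bounded_below) (use psi_in[OF I] True in auto)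
    moreover have "card (J - {i}) = k - 1" using True I(2) finJ cJ by simp
    moreover have "int (k - 1) * (int (L I) + int t) = int (k - 1) * int (L I) + int (k - 1) * int t"
      by (simp add: algebra_simps)
    moreover have "int t \<le> int (k - 1) * int t" using k2 by (simp add: mult_le_cancel_right1)
    moreover have "int k * int (L I) = int (L I) + int (k - 1) * int (L I)" using k2
      by (simp add: of_nat_diff algebra_simps)
    ultimately show ?thesis using psi_ii[OF I(1,2)] True by simp
  next
    case False
    have "\<not> J \<subseteq> I"
    proof
      assume "J \<subseteq> I"
      then have "J = I" using card_subset_eq[OF finI] cI cJ by auto
      then show False using False by simp
    qed
    then obtain j0 where j0: "j0 \<in> J" "j0 \<notin> I" by blast
    have j0n: "j0 < n" using sJ j0 by auto
    have j0i: "j0 \<noteq> i" using j0 I(2) by auto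
    have po: "int k * int M \<le> psi k n L M j0 I i t \<and>
      (int (k + 1) * int M \<le> psi k n L M j0 I i t \<or>
       int k * int (Lm k n L i j0) + int (L I) - int t \<le> psi k n L M j0 I i t)"
      by (rule psi_out[OF I j0(2) j0n])
    have sum1: "(\<Sum>j\<in>J. psi k n L M j I i t) = psi k n L M j0 I i t + (\<Sum>j\<in>J - {j0}. psi k n L M j I i t)"
      using j0 finJ by (simp add: sum.remove)
    show ?thesis
    proof (cases "i \<in> J")
      case False
      have "of_nat (card (J - {j0})) * int M \<le> (\<Sum>j\<in>J - {j0}. psi k n L M j I i t)"
        by (rule sum_bounded_below, rule psi_ge_M[OF I]) (use sJ False in auto)
      moreover have "card (J - {j0}) = k - 1" using j0 finJ cJ by simp
      moreover have "int (k - 1) * int M \<ge> int M" using k2 by (simp add: mult_le_cancel_right1)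
      ultimately show ?thesis using sum1 po kA MA' by simp
    next
      case True
      have sum2: "(\<Sum>j\<in>J - {j0}. psi k n L M j I i t) = psi k n L M i I i t + (\<Sum>j\<in>J - {j0} - {i}. psi k n L M j I i t)"
        by (rule sum.remove) (use True j0i finJ in auto)
      have "of_nat (card (J - {j0} - {i})) * int M \<le> (\<Sum>j\<in>J - {j0} - {i}. psi k n L M j I i t)"
        by (rule sum_bounded_below, rule psi_ge_M[OF I]) (use sJ in auto)
      moreover have "card (J - {j0} - {i}) = k - 2" using j0 j0i True finJ cJ by simp
      ultimately have rest: "int (k - 2) * int M \<le> (\<Sum>j\<in>J - {j0} - {i}. psi k n L M j I i t)" by simp
      have pii: "psi k n L M i I i t = int (L I) - int t" by (rule psi_ii[OF I(1,2)])
      have k2M: "int (k + 1) * int M + int (k - 2) * int M \<ge> int k * int M + int M"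
      proof -
        have "(k + 1) * M + (k - 2) * M \<ge> k * M + M" by (simp add: algebra_simps)
        then show ?thesis by (metis of_nat_add of_nat_le_iff of_nat_mult)
      qed
      have lmb: "int k * int (L J) \<le> int k * int (Lm k n L i j0) + int (k - 2) * int M"
      proof -
        have "k * L J \<le> k * Lm k n L i j0 + (k - 2) * M" using Lm_bound[OF J True j0(1) j0i[symmetric]] by simp
        then show ?thesis by (metis of_nat_add of_nat_le_iff of_nat_mult)
      qed
      show ?thesis using sum1 sum2 rest pii po k2M lmb kA MA' I(3) by linarith
    qed
  qed
qed

lemma fl_sum_q:
  assumes J: "J \<in> ksubsets k n"
  shows "fl_sum k (Vq k n L) (Ecq k n L) leaf J = k * L J"
proof -
  have finJ: "finite J" and cJ: "card J = k" and sJ: "J \<subseteq> {0..<n}" using ksub_props[OF J] by auto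
  let ?f = "\<lambda>x. \<Sum>j\<in>J. ddist k (Ecq k n L) x (leaf j)"
  have lower: "k * L J \<le> ?f x" if x: "x \<in> Vq k n L" for x
  proof -
    obtain I i t where I: "I \<in> ksubsets k n" "i \<in> I" "t \<le> L I" and xe: "x = pnode L I i t"
      using x unfolding Vq_def by auto
    have "int k * int (L J) \<le> (\<Sum>j\<in>J. psi k n L M j I i t)" by (rule sum_bound[OF I J])
    also have "\<dots> = (\<Sum>j\<in>J. phi k n L M j x)"
      using phi_pnode[OF I(1,2) _ I(3)] sJ xe by (intro sum.cong) auto
    also have "\<dots> \<le> (\<Sum>j\<in>J. int (ddist k (Ecq k n L) x (leaf j)))"
      using ddist_phi[OF _ x] sJ by (intro sum_mono) auto
    also have "\<dots> = int (?f x)" by simp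
    finally show ?thesis by (metis of_nat_le_iff of_nat_mult)
  qed
  obtain j1 where j1: "j1 \<in> J" using cJ k2 by fastforce
  have hubV: "hub J \<in> Vq k n L"
  proof -
    have "pnode L J j1 0 \<in> Vq k n L" unfolding Vq_def using J j1 by auto
    then show ?thesis by (simp add: pnode0)
  qed
  have upper: "?f (hub J) \<le> k * L J"
  proof -
    have "?f (hub J) \<le> (\<Sum>j\<in>J. L J)"
    proof (rule sum_mono)
      fix j assume j: "j \<in> J"
      have "walk_cost k (Ecq k n L) (pnode L J j 0) (pnode L J j (0 + L J)) (L J)"
        by (rule fwd_walk[OF J j]) simp
      then have "walk_cost k (Ecq k n L) (hub J) (leaf j) (L J)" using pnodeL[OF J] by (simp add: pnode0)
      then show "ddist k (Ecq k n L) (hub J) (leaf j) \<le> L J" by (rule ddist_le)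
    qed
    then show ?thesis using cJ by simp
  qed
  show ?thesis unfolding fl_sum_def
  proof (rule Min_eqI)
    show "finite (?f ` Vq k n L)" using Vq_finite by simp
    show "\<And>y. y \<in> ?f ` Vq k n L \<Longrightarrow> k * L J \<le> y" using lower by auto
    show "k * L J \<in> ?f ` Vq k n L" using lower[OF hubV] upper hubV by (intro image_eqI[where x="hub J"]) auto
  qed
qed

lemma coloring_q: "has_coloring k (Vq k n L) (Ecq k n L)"
  unfolding has_coloring_def
  by (rule exI[of _ "hq L"]) (auto simp: hq_edge)

end



lemma tm_shift: "tm x y z \<Longrightarrow> tm (x + (c::real)) (y + c) (z + c)"
  unfolding tm_def by auto

lemma lin_insert2:
  assumes "finite S" "x \<notin> S" "y \<notin> S" "x \<noteq> y"
  shows "lineality_vec lam (insert x (insert y S)) = lam x + lam y + sum lam S"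
  using assms unfolding lineality_vec_def by simp

lemma dressian_shift:
  assumes d: "\<pi> \<in> dressian k n" and sh: "\<forall>I\<in>ksubsets k n. \<sigma> I = \<pi> I + lineality_vec lam I" and k: "2 \<le> k"
  shows "\<sigma> \<in> dressian k n"
  unfolding dressian_def
proof (intro CollectI allI impI)
  fix S a b c d
  assume h: "S \<in> ksubsets (k - 2) n \<and> a < b \<and> b < c \<and> c < d \<and> d < n \<and> a \<notin> S \<and> b \<notin> S \<and> c \<notin> S \<and> d \<notin> S"
  have S: "S \<in> ksubsets (k-2) n" using h by blast
  have fin: "finite S" using S unfolding ksubsets_def using finite_subset by blast
  have e: "\<sigma> (insert x (insert y S)) = \<pi> (insert x (insert y S)) + lam x + lam y + sum lam S"
    if "x \<notin> S" "y \<notin> S" "x \<noteq> y" "x < n" "y < n" for x y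
    using sh kset_insert2[OF S k that] lin_insert2[OF fin that(1-3)] by simp
  have "tm (\<pi> (insert a (insert b S)) + \<pi> (insert c (insert d S)))
            (\<pi> (insert a (insert c S)) + \<pi> (insert b (insert d S)))
            (\<pi> (insert a (insert d S)) + \<pi> (insert b (insert c S)))"
    using d h unfolding dressian_def by (simp add: tm_let[symmetric] Let_def)
  from tm_shift[OF this, of "lam a + lam b + lam c + lam d + 2 * sum lam S"]
  have "tm (\<sigma> (insert a (insert b S)) + \<sigma> (insert c (insert d S)))
            (\<sigma> (insert a (insert c S)) + \<sigma> (insert b (insert d S)))
            (\<sigma> (insert a (insert d S)) + \<sigma> (insert b (insert c S)))"
    using e[of a b] e[of c d] e[of a c] e[of b d] e[of a d] e[of b c] h by (simp add: algebra_simps)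
  then show "let x = \<sigma> (insert a (insert b S)) + \<sigma> (insert c (insert d S));
            y = \<sigma> (insert a (insert c S)) + \<sigma> (insert b (insert d S));
            z = \<sigma> (insert a (insert d S)) + \<sigma> (insert b (insert c S)); m = min x (min y z)
        in x = m \<and> y = m \<or> x = m \<and> z = m \<or> y = m \<and> z = m"
    using tm_let by (simp add: Let_def)
qed

theorem theorem3p14:
  fixes k n :: nat and \<pi> :: "nat set \<Rightarrow> real"
  assumes "2 \<le> k" and "k < n"
    and "\<pi> \<in> trop_gr k n"
    and "integral_mod_lineality k n \<pi>"
  shows "\<exists>V E z. weak_scaffold k n V E z \<and>
           equiv_mod_lineality k n (trop_pluecker k V E z) \<pi>"
proof -
  note k2 = assms(1) and kn = assms(2)
  let ?K = "ksubsets k n"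
  obtain lam0 where lam0: "\<forall>I\<in>?K. \<pi> I + lineality_vec lam0 I \<in> \<int>"
    using assms(4) unfolding integral_mod_lineality_def by blast
  define p where "p I = \<lfloor>\<pi> I + lineality_vec lam0 I\<rfloor>" for I
  have pI: "real_of_int (p I) = \<pi> I + lineality_vec lam0 I" if "I \<in> ?K" for I
    using lam0 that unfolding p_def by (auto elim!: Ints_cases)
  have Kfin: "finite ?K" by (rule ksub_finite)
  have Kne: "?K \<noteq> {}" using exists_ksub[where i=0 and j=0 and n=n and k=k] k2 kn by auto
  define P where "P = Max (p ` ?K)"
  define m0 where "m0 = Min (p ` ?K)"
  define A where "A = nat (P - m0)"
  define M where "M = k * A + 1"
  define L where "L I = nat (int M + P - p I)" for I
  have pb: "m0 \<le> p I \<and> p I \<le> P" if "I \<in> ?K" for I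
    using that Kfin unfolding P_def m0_def by auto
  have LI: "int (L I) = int M + P - p I" if "I \<in> ?K" for I
    using pb[OF that] unfolding L_def by simp
  have Lrange: "M \<le> L I \<and> L I \<le> M + A" if "I \<in> ?K" for I
    using pb[OF that] LI[OF that] unfolding A_def by auto
  have MA: "k * A + 1 \<le> M" unfolding M_def by simp
  have Lr: "\<And>I. I \<in> ?K \<Longrightarrow> M \<le> L I \<and> L I \<le> M + A" using Lrange by blast
  have vq: "valid_quiver k n (Vq k n L) (Ecq k n L) leaf"
    by (rule valid_q[where k=k and n=n and L=L and M=M and A=A]) (use k2 kn Lr MA in auto)
  have cq: "has_coloring k (Vq k n L) (Ecq k n L)"
    by (rule coloring_q[where k=k and n=n and L=L and M=M and A=A]) (use k2 kn Lr MA in auto)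
  have fq: "fl_sum k (Vq k n L) (Ecq k n L) leaf J = k * L J" if "J \<in> ?K" for J
    by (rule fl_sum_q[where k=k and n=n and L=L and M=M and A=A]) (use k2 kn Lr MA that in auto)
  define lam' where "lam' i = lam0 i - real_of_int (int M + P) / real k" for i
  have kpos: "real k > 0" using k2 by simp
  have tp: "trop_pluecker k (Vq k n L) (Ecq k n L) leaf I = \<pi> I + lineality_vec lam' I" if I: "I \<in> ?K" for I
  proof -
    have cI: "card I = k" using ksub_props(3)[OF I] .
    have "trop_pluecker k (Vq k n L) (Ecq k n L) leaf I = - real (L I)"
    proof -
      have "fl_sum k (Vq k n L) (Ecq k n L) leaf I = k * L I" by (rule fq[OF I])
      then show ?thesis unfolding trop_pluecker_def using kpos by simp
    qed
    also have "\<dots> = - (real M + real_of_int P - real_of_int (p I))"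
      using LI[OF I] by (metis of_int_of_nat_eq of_int_add of_int_diff)
    also have "lineality_vec lam' I = lineality_vec lam0 I - real_of_int (int M + P)"
      unfolding lineality_vec_def lam'_def using cI kpos by (simp add: sum_subtractf)
    ultimately show ?thesis using pI[OF I] by simp
  qed
  have "\<pi> \<in> dressian k n" by (rule trop_gr_dressian[OF assms(3) k2])
  then have "trop_pluecker k (Vq k n L) (Ecq k n L) leaf \<in> dressian k n"
    by (rule dressian_shift[OF _ _ k2]) (use tp in auto)
  then have "weak_scaffold k n (Vq k n L) (Ecq k n L) leaf"
    unfolding weak_scaffold_def using vq cq by blast
  moreover have "equiv_mod_lineality k n (trop_pluecker k (Vq k n L) (Ecq k n L) leaf) \<pi>"
    unfolding equiv_mod_lineality_def using tp by blast
  ultimately show ?thesis by blast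
qed


end
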